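(* Let $(X,\|\cdot\|_X)$ be a Banach space, $n\in\mathbb{N}$, $\mathcal{K}\subset X$ compact and $\gamma>0$. Then there is a norm $\|\cdot\|_Y$ on $\mathbb{R}^n$ satisfying $$\max_j|y_j|\le\|y\|_Y\le\sum_{j=1}^n|y_j|\quad\text{for all } y=(y_1,\dots,y_n)\in\mathbb{R}^n,$$ such that $d_n^\gamma(\mathcal{K})_X=d^\gamma(\mathcal{K},Y)_X$.
   Context: For $k\ge1$ and a norm $\|\cdot\|_{Y_k}$ on $\mathbb{R}^k$ let $B_{Y_k}=\{y\in\mathbb{R}^k:\|y\|_{Y_k}\le1\}$. For $\mathcal{K}\subset X$ and $\gamma\ge0$, the fixed Lipschitz width is $d^\gamma(\mathcal{K},Y_k)_X=\inf_{\Phi}\sup_{f\in\mathcal{K}}\inf_{y\in B_{Y_k}}\|f-\Phi(y)\|_X$, the infimum being over all maps $\Phi:B_{Y_k}\to X$ with $\|\Phi(y)-\Phi(y')\|_X\le\gamma\|y-y'\|_{Y_k}$ for all $y,y'\in B_{Y_k}$. The Lipschitz width is $d_n^\gamma(\mathcal{K})_X=\inf_{1\le k\le n}\inf_{\|\cdot\|_{Y_k}}d^\gamma(\mathcal{K},Y_k)_X$, where the inner infimum is over all norms on $\mathbb{R}^k$. *)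

theory Defs
  imports "HOL-Analysis.Analysis"
begin

text \<open>R^k is represented as the functions nat => real vanishing outside {0..<k}
  (coordinates y_1..y_k are y 0 .. y (k-1)).\<close>

definition Rk :: "nat \<Rightarrow> (nat \<Rightarrow> real) set" where
  "Rk k = {y. \<forall>i\<ge>k. y i = 0}"

definition is_norm_on :: "nat \<Rightarrow> ((nat \<Rightarrow> real) \<Rightarrow> real) \<Rightarrow> bool" where
  "is_norm_on k N \<longleftrightarrow>
     (\<forall>y\<in>Rk k. 0 \<le> N y \<and> (N y = 0 \<longleftrightarrow> y = (\<lambda>_. 0))) \<and>
     (\<forall>c. \<forall>y\<in>Rk k. N (\<lambda>i. c * y i) = \<bar>c\<bar> * N y) \<and>
     (\<forall>y\<in>Rk k. \<forall>z\<in>Rk k. N (\<lambda>i. y i + z i) \<le> N y + N z)"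

definition unit_ball_Y :: "nat \<Rightarrow> ((nat \<Rightarrow> real) \<Rightarrow> real) \<Rightarrow> (nat \<Rightarrow> real) set" where
  "unit_ball_Y k N = {y \<in> Rk k. N y \<le> 1}"

definition lip_maps :: "real \<Rightarrow> nat \<Rightarrow> ((nat \<Rightarrow> real) \<Rightarrow> real) \<Rightarrow> ((nat \<Rightarrow> real) \<Rightarrow> 'a::real_normed_vector) set" where
  "lip_maps \<gamma> k N = {\<Phi>. \<forall>y\<in>unit_ball_Y k N. \<forall>y'\<in>unit_ball_Y k N.
       norm (\<Phi> y - \<Phi> y') \<le> \<gamma> * N (\<lambda>i. y i - y' i)}"

definition fixed_lip_width :: "real \<Rightarrow> 'a::real_normed_vector set \<Rightarrow> nat \<Rightarrow> ((nat \<Rightarrow> real) \<Rightarrow> real) \<Rightarrow> ennreal" where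
  "fixed_lip_width \<gamma> K k N =
     (INF \<Phi>\<in>(lip_maps \<gamma> k N :: ((nat \<Rightarrow> real) \<Rightarrow> 'a) set).
        SUP f\<in>K. INF y\<in>unit_ball_Y k N. ennreal (norm (f - \<Phi> y)))"

definition lip_width :: "real \<Rightarrow> 'a::real_normed_vector set \<Rightarrow> nat \<Rightarrow> ennreal" where
  "lip_width \<gamma> K n =
     (INF k\<in>{1..n}. INF N\<in>{N. is_norm_on k N}. fixed_lip_width \<gamma> K k N)"

end

theory Submission
  imports Defs "Jordan_Normal_Form.Determinant" "HOL-Complex_Analysis.Great_Picard"
begin

lemma le_INF_plus:
  fixes x :: ennreal
  assumes "\<And>z. z \<in> B \<Longrightarrow> x \<le> g z + ennreal d"
  shows "x \<le> (INF z\<in>B. g z) + ennreal d"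
proof -
  have "x - ennreal d \<le> g z" if "z \<in> B" for z
    using assms[OF that] by (simp add: add.commute ennreal_minus_le_iff)
  then have "x - ennreal d \<le> (INF z\<in>B. g z)" by (rule INF_greatest)
  then show ?thesis
    by (metis add.commute add_right_mono diff_add_self_ennreal dual_order.trans ennreal_minus_le_iff le_iff_add)
qed

lemma width_le:
  fixes K :: "'a::real_normed_vector set"
  assumes H: "\<And>\<Phi>. \<Phi> \<in> (lip_maps \<gamma> k N :: ((nat\<Rightarrow>real)\<Rightarrow>'a) set) \<Longrightarrow> \<exists>\<Psi> \<in> lip_maps \<gamma> k' N'.
      \<forall>z\<in>unit_ball_Y k N. \<exists>y\<in>unit_ball_Y k' N'. norm (\<Psi> y - \<Phi> z) \<le> d"
  shows "fixed_lip_width \<gamma> K k' N' \<le> fixed_lip_width \<gamma> K k N + ennreal d"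
  unfolding fixed_lip_width_def
proof (rule le_INF_plus)
  fix \<Phi> :: "(nat\<Rightarrow>real)\<Rightarrow>'a" assume \<Phi>: "\<Phi> \<in> lip_maps \<gamma> k N"
  obtain \<Psi> where \<Psi>: "\<Psi> \<in> lip_maps \<gamma> k' N'"
    and cl: "\<forall>z\<in>unit_ball_Y k N. \<exists>y\<in>unit_ball_Y k' N'. norm (\<Psi> y - \<Phi> z) \<le> d"
    using H[OF \<Phi>] by blast
  have "(SUP f\<in>K. INF y\<in>unit_ball_Y k' N'. ennreal (norm (f - \<Psi> y)))
      \<le> (SUP f\<in>K. INF z\<in>unit_ball_Y k N. ennreal (norm (f - \<Phi> z))) + ennreal d"
  proof (rule SUP_least)
    fix f assume f: "f \<in> K"
    have "(INF y\<in>unit_ball_Y k' N'. ennreal (norm (f - \<Psi> y)))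
        \<le> (INF z\<in>unit_ball_Y k N. ennreal (norm (f - \<Phi> z))) + ennreal d"
    proof (rule le_INF_plus)
      fix z assume z: "z \<in> unit_ball_Y k N"
      then obtain y where y: "y \<in> unit_ball_Y k' N'" and yz: "norm (\<Psi> y - \<Phi> z) \<le> d"
        using cl by blast
      have "norm (f - \<Psi> y) \<le> norm (f - \<Phi> z) + d"
        using norm_triangle_ineq[of "f - \<Phi> z" "\<Phi> z - \<Psi> y"] yz by (simp add: norm_minus_commute)
      then have "ennreal (norm (f - \<Psi> y)) \<le> ennreal (norm (f - \<Phi> z)) + ennreal d"
        by (metis ennreal_le_iff2 ennreal_plus norm_ge_zero order.trans yz ennreal_leI)
      then show "(INF y\<in>unit_ball_Y k' N'. ennreal (norm (f - \<Psi> y))) \<le> ennreal (norm (f - \<Phi> z)) + ennreal d"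
        by (meson INF_lower y order.trans)
    qed
    also have "\<dots> \<le> (SUP f\<in>K. INF z\<in>unit_ball_Y k N. ennreal (norm (f - \<Phi> z))) + ennreal d"
      by (intro add_right_mono SUP_upper f)
    finally show "(INF y\<in>unit_ball_Y k' N'. ennreal (norm (f - \<Psi> y))) \<le> \<dots>" .
  qed
  then show "(INF \<Psi>\<in>lip_maps \<gamma> k' N'. SUP f\<in>K. INF y\<in>unit_ball_Y k' N'. ennreal (norm (f - \<Psi> y)))
      \<le> (SUP f\<in>K. INF z\<in>unit_ball_Y k N. ennreal (norm (f - \<Phi> z))) + ennreal d"
    by (meson INF_lower \<Psi> order.trans)
qed


lemma Rk_scale[simp]: "y \<in> Rk k \<Longrightarrow> (\<lambda>i. c * y i) \<in> Rk k"
  and Rk_div[simp]: "y \<in> Rk k \<Longrightarrow> (\<lambda>i. y i / c) \<in> Rk k"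
  and Rk_add[simp]: "y \<in> Rk k \<Longrightarrow> z \<in> Rk k \<Longrightarrow> (\<lambda>i. y i + z i) \<in> Rk k"
  and Rk_diff[simp]: "y \<in> Rk k \<Longrightarrow> z \<in> Rk k \<Longrightarrow> (\<lambda>i. y i - z i) \<in> Rk k"
  and Rk_zero[simp]: "(\<lambda>_. 0) \<in> Rk k"
  by (auto simp: Rk_def)

lemma
  assumes "is_norm_on k N"
  shows N_nonneg: "y \<in> Rk k \<Longrightarrow> 0 \<le> N y"
    and N_zero_iff: "y \<in> Rk k \<Longrightarrow> N y = 0 \<longleftrightarrow> y = (\<lambda>_. 0)"
    and N_scale: "y \<in> Rk k \<Longrightarrow> N (\<lambda>i. c * y i) = \<bar>c\<bar> * N y"
    and N_tri: "y \<in> Rk k \<Longrightarrow> z \<in> Rk k \<Longrightarrow> N (\<lambda>i. y i + z i) \<le> N y + N z"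
  using assms unfolding is_norm_on_def by auto

lemma N_zero:
  assumes "is_norm_on k N" shows "N (\<lambda>_. 0) = 0"
  using N_zero_iff[OF assms Rk_zero] by simp

lemma N_div:
  assumes "is_norm_on k N" "y \<in> Rk k" shows "N (\<lambda>i. y i / c) = N y / \<bar>c\<bar>"
  using N_scale[OF assms, of "1/c"] by (simp add: divide_inverse mult.commute abs_inverse)

lemma N_sym:
  assumes "is_norm_on k N" "y \<in> Rk k" "z \<in> Rk k"
  shows "N (\<lambda>i. y i - z i) = N (\<lambda>i. z i - y i)"
proof -
  have "N (\<lambda>i. (-1) * (y i - z i)) = N (\<lambda>i. y i - z i)"
    using N_scale[OF assms(1) Rk_diff[OF assms(2,3)], of "-1"] by simp
  moreover have "(\<lambda>i. (-1) * (y i - z i)) = (\<lambda>i. z i - y i)" by auto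
  ultimately show ?thesis by simp
qed

lemma N_sub:
  assumes "is_norm_on k N" "y \<in> Rk k" "z \<in> Rk k"
  shows "N y \<le> N z + N (\<lambda>i. y i - z i)"
proof -
  have "N (\<lambda>i. z i + (y i - z i)) \<le> N z + N (\<lambda>i. y i - z i)"
    by (rule N_tri[OF assms(1) assms(3) Rk_diff[OF assms(2,3)]])
  moreover have "(\<lambda>i. z i + (y i - z i)) = y" by auto
  ultimately show ?thesis by simp
qed

lemma width_transfer:
  fixes K :: "'a::real_normed_vector set"
  assumes A: "is_norm_on n A" and B: "is_norm_on n B" and c: "c \<ge> 1" and g: "\<gamma> \<ge> 0"
    and AB: "\<And>y. y \<in> Rk n \<Longrightarrow> A y \<le> c * B y" and BA: "\<And>y. y \<in> Rk n \<Longrightarrow> B y \<le> c * A y"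
  shows "fixed_lip_width \<gamma> K n B \<le> fixed_lip_width \<gamma> K n A + ennreal (\<gamma> * (1 - 1 / c^2))"
proof (rule width_le)
  fix \<Phi> :: "(nat\<Rightarrow>real)\<Rightarrow>'a" assume \<Phi>: "\<Phi> \<in> lip_maps \<gamma> n A"
  have cpos: "c > 0" using c by simp
  define \<Psi> where "\<Psi> = (\<lambda>y. \<Phi> (\<lambda>i. y i / c))"
  have inA: "(\<lambda>i. y i / c) \<in> unit_ball_Y n A" if "y \<in> unit_ball_Y n B" for y
  proof -
    have y: "y \<in> Rk n" "B y \<le> 1" using that by (auto simp: unit_ball_Y_def)
    have "A (\<lambda>i. y i / c) = A y / c" using N_div[OF A y(1)] cpos by simp
    also have "\<dots> \<le> B y" using AB[OF y(1)] cpos by (simp add: divide_le_eq mult.commute)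
    finally show ?thesis using y by (auto simp: unit_ball_Y_def)
  qed
  have "\<Psi> \<in> lip_maps \<gamma> n B"
    unfolding lip_maps_def mem_Collect_eq
  proof (intro ballI)
    fix y y' assume y: "y \<in> unit_ball_Y n B" and y': "y' \<in> unit_ball_Y n B"
    have yy: "y \<in> Rk n" "y' \<in> Rk n" using y y' by (auto simp: unit_ball_Y_def)
    have "norm (\<Psi> y - \<Psi> y') \<le> \<gamma> * A (\<lambda>i. y i / c - y' i / c)"
      using \<Phi> inA[OF y] inA[OF y'] unfolding lip_maps_def \<Psi>_def by blast
    also have "(\<lambda>i. y i / c - y' i / c) = (\<lambda>i. (y i - y' i) / c)" by (auto simp: diff_divide_distrib)
    also have "A \<dots> = A (\<lambda>i. y i - y' i) / c" using N_div[OF A Rk_diff[OF yy]] cpos by simp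
    also have "\<dots> \<le> B (\<lambda>i. y i - y' i)" using AB[OF Rk_diff[OF yy]] cpos by (simp add: divide_le_eq mult.commute)
    finally show "norm (\<Psi> y - \<Psi> y') \<le> \<gamma> * B (\<lambda>i. y i - y' i)"
      using g by (smt (verit, ccfv_SIG) mult_left_mono)
  qed
  moreover have "\<exists>y\<in>unit_ball_Y n B. norm (\<Psi> y - \<Phi> z) \<le> \<gamma> * (1 - 1 / c^2)"
    if z: "z \<in> unit_ball_Y n A" for z
  proof -
    have zz: "z \<in> Rk n" "A z \<le> 1" using z by (auto simp: unit_ball_Y_def)
    have yB: "(\<lambda>i. z i / c) \<in> unit_ball_Y n B"
    proof -
      have "B (\<lambda>i. z i / c) = B z / c" using N_div[OF B zz(1)] cpos by simp
      also have "\<dots> \<le> A z" using BA[OF zz(1)] cpos by (simp add: divide_le_eq mult.commute)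
      finally show ?thesis using zz by (auto simp: unit_ball_Y_def)
    qed
    have zc: "(\<lambda>i. z i / c / c) \<in> unit_ball_Y n A"
    proof -
      have "A (\<lambda>i. z i / c / c) = A z / c / c" using N_div[OF A Rk_div[OF zz(1)]] N_div[OF A zz(1)] cpos by simp
      also have "\<dots> \<le> A z" using cpos c N_nonneg[OF A zz(1)]
        by (smt (verit) divide_nonneg_nonneg divide_right_mono le_divide_eq_1 mult_le_cancel_left1 divide_le_eq)
      finally show ?thesis using zz by (auto simp: unit_ball_Y_def)
    qed
    have "norm (\<Psi> (\<lambda>i. z i / c) - \<Phi> z) \<le> \<gamma> * A (\<lambda>i. z i / c / c - z i)"
      using \<Phi> zc z unfolding lip_maps_def \<Psi>_def by blast
    also have "(\<lambda>i. z i / c / c - z i) = (\<lambda>i. (1 / c^2 - 1) * z i)"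
      by (auto simp: field_simps power2_eq_square)
    also have "A \<dots> = \<bar>1 / c^2 - 1\<bar> * A z" by (rule N_scale[OF A zz(1)])
    also have "\<bar>1 / c^2 - 1\<bar> = 1 - 1 / c^2"
    proof -
      have "1 \<le> c^2" using c by (simp add: one_le_power)
      then have "1 / c^2 \<le> 1" by (simp add: divide_le_eq_1)
      then show ?thesis by simp
    qed
    also have "\<gamma> * ((1 - 1 / c^2) * A z) \<le> \<gamma> * (1 - 1 / c^2)"
    proof -
      have "1 \<le> c^2" using c by (simp add: one_le_power)
      then have "0 \<le> 1 - 1 / c^2" by (simp add: divide_le_eq_1)
      then show ?thesis using zz(2) g by (simp add: mult_left_mono mult_right_le_one_le N_nonneg[OF A zz(1)])
    qed
    finally show ?thesis using yB by blast
  qed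
  ultimately show "\<exists>\<Psi>\<in>lip_maps \<gamma> n B. \<forall>z\<in>unit_ball_Y n A. \<exists>y\<in>unit_ball_Y n B. norm (\<Psi> y - \<Phi> z) \<le> \<gamma> * (1 - 1 / c^2)"
    by blast
qed

definition extn :: "nat \<Rightarrow> nat \<Rightarrow> ((nat \<Rightarrow> real) \<Rightarrow> real) \<Rightarrow> (nat \<Rightarrow> real) \<Rightarrow> real" where
  "extn k n N y = N (\<lambda>i. if i < k then y i else 0) + (\<Sum>i\<in>{k..<n}. \<bar>y i\<bar>)"

lemma trunc_Rk[simp]: "(\<lambda>i. if i < k then y i else 0) \<in> Rk k"
  by (auto simp: Rk_def)

lemma extn_norm:
  assumes N: "is_norm_on k N" and kn: "k \<le> n"
  shows "is_norm_on n (extn k n N)"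
  unfolding is_norm_on_def
proof (intro conjI ballI allI)
  fix y assume y: "y \<in> Rk n"
  show "0 \<le> extn k n N y" unfolding extn_def
    by (intro add_nonneg_nonneg N_nonneg[OF N] trunc_Rk sum_nonneg) auto
  show "extn k n N y = 0 \<longleftrightarrow> y = (\<lambda>_. 0)"
  proof
    assume "extn k n N y = 0"
    then have h1: "N (\<lambda>i. if i < k then y i else 0) = 0" and h2: "(\<Sum>i\<in>{k..<n}. \<bar>y i\<bar>) = 0"
      unfolding extn_def using N_nonneg[OF N trunc_Rk, of y] sum_nonneg[of "{k..<n}" "\<lambda>i. \<bar>y i\<bar>"]
      by (smt (verit) abs_ge_zero)+
    from h1 have t: "(\<lambda>i. if i < k then y i else 0) = (\<lambda>_. 0)" using N_zero_iff[OF N trunc_Rk] by blast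
    from h2 have s: "\<forall>i\<in>{k..<n}. \<bar>y i\<bar> = 0" by (subst (asm) sum_nonneg_eq_0_iff) auto
    show "y = (\<lambda>_. 0)"
    proof
      fix i show "y i = 0"
      proof (cases "i < k")
        case True then show ?thesis using fun_cong[OF t, of i] by simp
      next
        case False then show ?thesis using s y by (cases "i < n") (auto simp: Rk_def)
      qed
    qed
  next
    assume "y = (\<lambda>_. 0)"
    then have "(\<lambda>i::nat. if i < k then y i else 0) = (\<lambda>_. 0)" by auto
    with \<open>y = (\<lambda>_. 0)\<close> show "extn k n N y = 0" unfolding extn_def using N_zero[OF N] by simp
  qed
next
  fix c y assume y: "y \<in> Rk n"
  have "(\<lambda>i. if i < k then c * y i else 0) = (\<lambda>i. c * (if i < k then y i else 0))" by auto
  then show "extn k n N (\<lambda>i. c * y i) = \<bar>c\<bar> * extn k n N y"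
    unfolding extn_def using N_scale[OF N trunc_Rk, of c y]
    by (simp add: abs_mult sum_distrib_left distrib_left)
next
  fix y z assume y: "y \<in> Rk n" and z: "z \<in> Rk n"
  have e: "(\<lambda>i. if i < k then y i + z i else 0) = (\<lambda>i. (if i < k then y i else 0) + (if i < k then z i else 0))" by auto
  have "(\<Sum>i\<in>{k..<n}. \<bar>y i + z i\<bar>) \<le> (\<Sum>i\<in>{k..<n}. \<bar>y i\<bar>) + (\<Sum>i\<in>{k..<n}. \<bar>z i\<bar>)"
    by (simp add: sum.distrib[symmetric] sum_mono abs_triangle_ineq)
  then show "extn k n N (\<lambda>i. y i + z i) \<le> extn k n N y + extn k n N z"
    unfolding extn_def e using N_tri[OF N trunc_Rk trunc_Rk, of y z] by linarith
qed

lemma extn_width: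
  fixes K :: "'a::real_normed_vector set"
  assumes N: "is_norm_on k N" and kn: "k \<le> n" and g: "\<gamma> \<ge> 0"
  shows "fixed_lip_width \<gamma> K n (extn k n N) \<le> fixed_lip_width \<gamma> K k N"
proof -
  have "fixed_lip_width \<gamma> K n (extn k n N) \<le> fixed_lip_width \<gamma> K k N + ennreal 0"
  proof (rule width_le)
    fix \<Phi> :: "(nat\<Rightarrow>real)\<Rightarrow>'a" assume \<Phi>: "\<Phi> \<in> lip_maps \<gamma> k N"
    define P where "P = (\<lambda>(y::nat\<Rightarrow>real) i. if i < k then y i else 0)"
    have PR: "P y \<in> Rk k" for y unfolding P_def by simp
    have Ple: "N (P y) \<le> extn k n N y" for y
      unfolding extn_def P_def by (simp add: sum_nonneg)
    have inN: "P y \<in> unit_ball_Y k N" if "y \<in> unit_ball_Y n (extn k n N)" for y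
      using that Ple[of y] PR[of y] by (auto simp: unit_ball_Y_def)
    have "(\<Phi> \<circ> P) \<in> lip_maps \<gamma> n (extn k n N)"
      unfolding lip_maps_def mem_Collect_eq
    proof (intro ballI)
      fix y y' assume y: "y \<in> unit_ball_Y n (extn k n N)" and y': "y' \<in> unit_ball_Y n (extn k n N)"
      have "norm ((\<Phi> \<circ> P) y - (\<Phi> \<circ> P) y') \<le> \<gamma> * N (\<lambda>i. P y i - P y' i)"
        using \<Phi> inN[OF y] inN[OF y'] unfolding lip_maps_def by auto
      also have "(\<lambda>i. P y i - P y' i) = P (\<lambda>i. y i - y' i)" unfolding P_def by auto
      also have "\<gamma> * N \<dots> \<le> \<gamma> * extn k n N (\<lambda>i. y i - y' i)"
        using Ple g by (simp add: mult_left_mono)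
      finally show "norm ((\<Phi> \<circ> P) y - (\<Phi> \<circ> P) y') \<le> \<gamma> * extn k n N (\<lambda>i. y i - y' i)" .
    qed
    moreover have "\<exists>y\<in>unit_ball_Y n (extn k n N). norm ((\<Phi> \<circ> P) y - \<Phi> z) \<le> 0"
      if z: "z \<in> unit_ball_Y k N" for z
    proof -
      have zk: "z \<in> Rk k" "N z \<le> 1" using z by (auto simp: unit_ball_Y_def)
      have Pz: "P z = z" using zk(1) unfolding P_def Rk_def by auto
      have s0: "(\<Sum>i\<in>{k..<n}. \<bar>z i\<bar>) = 0" using zk(1) by (auto simp: Rk_def)
      have zn: "z \<in> Rk n" using zk(1) kn by (auto simp: Rk_def)
      have "extn k n N z = N z" unfolding extn_def using Pz s0 unfolding P_def by simp
      then have "z \<in> unit_ball_Y n (extn k n N)" using zn zk by (auto simp: unit_ball_Y_def)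
      then show ?thesis using Pz by (intro bexI[of _ z]) auto
    qed
    ultimately show "\<exists>\<Psi>\<in>lip_maps \<gamma> n (extn k n N). \<forall>z\<in>unit_ball_Y k N.
        \<exists>y\<in>unit_ball_Y n (extn k n N). norm (\<Psi> y - \<Phi> z) \<le> 0" by blast
  qed
  then show ?thesis by simp
qed

definition l1 :: "nat \<Rightarrow> (nat \<Rightarrow> real) \<Rightarrow> real" where "l1 n y = (\<Sum>j<n. \<bar>y j\<bar>)"
definition ev :: "nat \<Rightarrow> nat \<Rightarrow> real" where "ev j = (\<lambda>i. if i = j then 1 else 0)"

lemma ev_Rk: "j < n \<Longrightarrow> ev j \<in> Rk n" by (auto simp: ev_def Rk_def)

lemma l1_nonneg: "0 \<le> l1 n y" unfolding l1_def by (simp add: sum_nonneg)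

lemma coord_le_l1: "j < n \<Longrightarrow> \<bar>y j\<bar> \<le> l1 n y"
  unfolding l1_def by (rule member_le_sum) auto

lemma lin_comb_Rk: "(\<And>j. j \<in> J \<Longrightarrow> v j \<in> Rk k) \<Longrightarrow> (\<lambda>i. \<Sum>j\<in>J. a j * v j i) \<in> Rk k"
  by (auto simp: Rk_def)

lemma lin_comb_le:
  assumes N: "is_norm_on k N" and J: "finite J" and v: "\<And>j. j \<in> J \<Longrightarrow> v j \<in> Rk k"
  shows "N (\<lambda>i. \<Sum>j\<in>J. a j * v j i) \<le> (\<Sum>j\<in>J. \<bar>a j\<bar> * N (v j))"
  using J v
proof (induction J rule: finite_induct)
  case empty
  then show ?case using N_zero[OF N] by simp
next
  case (insert x F)
  have e: "(\<lambda>i. \<Sum>j\<in>insert x F. a j * v j i) = (\<lambda>i. a x * v x i + (\<Sum>j\<in>F. a j * v j i))"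
    using insert.hyps by auto
  have vx: "v x \<in> Rk k" using insert.prems by auto
  have vF: "(\<lambda>i. \<Sum>j\<in>F. a j * v j i) \<in> Rk k" by (rule lin_comb_Rk) (use insert.prems in auto)
  have "N (\<lambda>i. a x * v x i + (\<Sum>j\<in>F. a j * v j i)) \<le> N (\<lambda>i. a x * v x i) + N (\<lambda>i. \<Sum>j\<in>F. a j * v j i)"
    by (rule N_tri[OF N Rk_scale[OF vx] vF])
  also have "\<dots> \<le> \<bar>a x\<bar> * N (v x) + (\<Sum>j\<in>F. \<bar>a j\<bar> * N (v j))"
    using N_scale[OF N vx] insert.IH insert.prems by auto
  finally show ?case using e insert.hyps by simp
qed

lemma Rk_decomp:
  assumes "y \<in> Rk n" shows "y = (\<lambda>i. \<Sum>j<n. y j * ev j i)"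
proof
  fix i
  have "(\<Sum>j<n. y j * ev j i) = (\<Sum>j<n. if j = i then y j else 0)"
    by (rule sum.cong) (auto simp: ev_def)
  also have "\<dots> = (if i < n then y i else 0)" by (simp add: sum.delta)
  also have "\<dots> = y i" using assms by (auto simp: Rk_def)
  finally show "y i = (\<Sum>j<n. y j * ev j i)" by simp
qed

definition Cu :: "nat \<Rightarrow> ((nat \<Rightarrow> real) \<Rightarrow> real) \<Rightarrow> real" where "Cu n N = (\<Sum>j<n. N (ev j))"

lemma N_upper:
  assumes N: "is_norm_on n N" and y: "y \<in> Rk n"
  shows "N y \<le> Cu n N * l1 n y"
proof -
  have "N y = N (\<lambda>i. \<Sum>j<n. y j * ev j i)" using Rk_decomp[OF y] by simp
  also have "\<dots> \<le> (\<Sum>j<n. \<bar>y j\<bar> * N (ev j))" by (rule lin_comb_le[OF N]) (auto intro: ev_Rk)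
  also have "\<dots> \<le> (\<Sum>j<n. l1 n y * N (ev j))"
    by (intro sum_mono mult_right_mono coord_le_l1 N_nonneg[OF N] ev_Rk) auto
  also have "\<dots> = Cu n N * l1 n y" unfolding Cu_def by (simp add: sum_distrib_left mult.commute)
  finally show ?thesis .
qed

lemma Cu_nonneg: assumes "is_norm_on n N" shows "0 \<le> Cu n N"
  unfolding Cu_def by (auto intro!: sum_nonneg N_nonneg[OF assms] ev_Rk)

lemma l1_diff_tendsto:
  assumes "\<And>i. (\<lambda>m. U m i) \<longlonglongrightarrow> u i"
  shows "(\<lambda>m. l1 n (\<lambda>i. u i - U m i)) \<longlonglongrightarrow> 0"
proof -
  have "(\<lambda>m. \<Sum>j<n. \<bar>u j - U m j\<bar>) \<longlonglongrightarrow> (\<Sum>j<n. \<bar>u j - u j\<bar>)"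
    by (intro tendsto_intros assms)
  then show ?thesis unfolding l1_def by simp
qed

lemma l1_tendsto:
  assumes "\<And>i. (\<lambda>m. U m i) \<longlonglongrightarrow> u i"
  shows "(\<lambda>m. l1 n (U m)) \<longlonglongrightarrow> l1 n u"
  unfolding l1_def by (intro tendsto_intros assms)

lemma limit_Rk:
  assumes "\<And>m. U m \<in> Rk n" "\<And>i. (\<lambda>m. U m i) \<longlonglongrightarrow> u i"
  shows "u \<in> Rk n"
  unfolding Rk_def
proof (intro CollectI allI impI)
  fix i assume "n \<le> i"
  then have "(\<lambda>m. U m i) = (\<lambda>m. 0)" using assms(1) by (auto simp: Rk_def)
  then show "u i = 0" using assms(2)[of i] by (simp add: LIMSEQ_const_iff)
qed

lemma limit_N_le:
  assumes N: "is_norm_on n N" and U: "\<And>m. U m \<in> Rk n" and lim: "\<And>i. (\<lambda>m. U m i) \<longlonglongrightarrow> u i"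
    and b: "(\<lambda>m. B m) \<longlonglongrightarrow> b" and NB: "\<And>m. N (U m) \<le> B m"
  shows "N u \<le> b"
proof -
  have u: "u \<in> Rk n" by (rule limit_Rk[OF U lim])
  have "\<And>m. N u \<le> B m + Cu n N * l1 n (\<lambda>i. u i - U m i)"
  proof -
    fix m
    have "N u \<le> N (U m) + N (\<lambda>i. u i - U m i)" by (rule N_sub[OF N u U])
    also have "\<dots> \<le> B m + Cu n N * l1 n (\<lambda>i. u i - U m i)"
      using NB[of m] N_upper[OF N Rk_diff[OF u U[of m]]] by linarith
    finally show "N u \<le> B m + Cu n N * l1 n (\<lambda>i. u i - U m i)" .
  qed
  moreover have "(\<lambda>m. B m + Cu n N * l1 n (\<lambda>i. u i - U m i)) \<longlonglongrightarrow> b + Cu n N * 0"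
    by (intro tendsto_intros b l1_diff_tendsto lim)
  ultimately show ?thesis by (intro LIMSEQ_le_const) auto
qed

lemma N_lower:
  assumes N: "is_norm_on n N"
  shows "\<exists>c>0. \<forall>y\<in>Rk n. c * l1 n y \<le> N y"
proof (rule ccontr)
  assume neg: "\<not> ?thesis"
  have "\<exists>y\<in>Rk n. N y < inverse (real (Suc m)) * l1 n y" for m
  proof -
    have "inverse (real (Suc m)) > 0" by simp
    with neg obtain y where "y \<in> Rk n" "\<not> inverse (real (Suc m)) * l1 n y \<le> N y" by blast
    then show ?thesis by (auto simp: not_le)
  qed
  then obtain Y where Y: "\<And>m. Y m \<in> Rk n" and YN: "\<And>m. N (Y m) < inverse (real (Suc m)) * l1 n (Y m)"
    by metis
  have lpos: "l1 n (Y m) > 0" for m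
  proof -
    have "0 < inverse (real (Suc m)) * l1 n (Y m)" using YN[of m] N_nonneg[OF N Y, of m] by linarith
    then show ?thesis by (simp add: zero_less_mult_iff)
  qed
  define U where "U m = (\<lambda>i. Y m i / l1 n (Y m))" for m
  have UR: "U m \<in> Rk n" for m unfolding U_def using Y by simp
  have Ul1: "l1 n (U m) = 1" for m
  proof -
    have "l1 n (U m) = (\<Sum>j<n. \<bar>U m j\<bar>)" by (simp only: l1_def)
    also have "\<dots> = (\<Sum>j<n. \<bar>Y m j\<bar> / l1 n (Y m))"
    proof (rule sum.cong)
      fix j
      have "\<bar>Y m j / l1 n (Y m)\<bar> = \<bar>Y m j\<bar> / \<bar>l1 n (Y m)\<bar>" by (rule abs_divide)
      then show "\<bar>U m j\<bar> = \<bar>Y m j\<bar> / l1 n (Y m)" unfolding U_def using l1_nonneg[of n "Y m"] by simp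
    qed simp
    also have "\<dots> = l1 n (Y m) / l1 n (Y m)" by (simp add: sum_divide_distrib[symmetric] l1_def[of n "Y m"])
    finally show ?thesis using lpos[of m] by simp
  qed
  have UN: "N (U m) \<le> inverse (real (Suc m))" for m
  proof -
    have "N (U m) = N (Y m) / \<bar>l1 n (Y m)\<bar>" unfolding U_def by (rule N_div[OF N Y])
    also have "\<dots> = N (Y m) / l1 n (Y m)" using lpos[of m] by simp
    also have "\<dots> \<le> inverse (real (Suc m))" using YN[of m] lpos[of m] by (simp only: divide_le_eq) simp
    finally show ?thesis .
  qed
  have Ub: "norm (U m i) \<le> 1" for m i
  proof (cases "i < n")
    case True then show ?thesis using coord_le_l1[OF True, of "U m"] Ul1 by simp
  next
    case False then show ?thesis using UR[of m] by (auto simp: Rk_def)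
  qed
  obtain r where r: "strict_mono r" and conv: "\<And>i. i \<in> UNIV \<Longrightarrow> \<exists>l. (\<lambda>m. U (r m) i) \<longlonglongrightarrow> l"
    by (rule function_convergent_subsequence[of "UNIV::nat set" U 1]) (use Ub in auto)
  have "\<exists>u. \<forall>i. (\<lambda>m. U (r m) i) \<longlonglongrightarrow> u i"
    by (rule choice) (use conv in blast)
  then obtain u where u: "\<And>i. (\<lambda>m. U (r m) i) \<longlonglongrightarrow> u i" by blast
  have uR: "u \<in> Rk n" by (rule limit_Rk[OF UR u])
  have "(\<lambda>m. l1 n (U (r m))) \<longlonglongrightarrow> l1 n u" by (rule l1_tendsto[OF u])
  then have ul1: "l1 n u = 1" using Ul1 by (simp add: LIMSEQ_const_iff)
  have inv: "(\<lambda>m. inverse (real (Suc (r m)))) \<longlonglongrightarrow> 0"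
    using LIMSEQ_subseq_LIMSEQ[OF LIMSEQ_inverse_real_of_nat r] by (simp add: o_def)
  have "N u \<le> 0" by (rule limit_N_le[OF N UR u inv UN])
  then have "u = (\<lambda>_. 0)" using N_nonneg[OF N uR] N_zero_iff[OF N uR] by simp
  then show False using ul1 unfolding l1_def by simp
qed

definition matA :: "nat \<Rightarrow> (nat \<Rightarrow> nat \<Rightarrow> real) \<Rightarrow> real mat" where
  "matA n v = mat n n (\<lambda>(i,j). v j i)"
definition Dt :: "nat \<Rightarrow> (nat \<Rightarrow> nat \<Rightarrow> real) \<Rightarrow> real" where
  "Dt n v = Determinant.det (matA n v)"

lemma matA_carrier[simp]: "matA n v \<in> carrier_mat n n" by (simp add: matA_def)
lemma matA_dim[simp]: "dim_row (matA n v) = n" "dim_col (matA n v) = n" by (simp_all add: matA_def)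
lemma matA_index[simp]: "i < n \<Longrightarrow> j < n \<Longrightarrow> matA n v $$ (i,j) = v j i" by (simp add: matA_def)

lemma Dt_expand: "Dt n v = (\<Sum>p | p permutes {0..<n}. of_int (sign p) * (\<Prod>i=0..<n. v (p i) i))"
  unfolding Dt_def Determinant.det_def
  by (auto intro!: sum.cong prod.cong simp: permutes_in_image)

lemma Dt_cong: "(\<And>i j. i < n \<Longrightarrow> j < n \<Longrightarrow> v j i = w j i) \<Longrightarrow> Dt n v = Dt n w"
  unfolding Dt_expand by (auto intro!: sum.cong prod.cong simp: permutes_in_image)

lemma Dt_tendsto:
  assumes "\<And>j i. (\<lambda>m. V m j i) \<longlonglongrightarrow> v j i"
  shows "(\<lambda>m. Dt n (V m)) \<longlonglongrightarrow> Dt n v"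
  unfolding Dt_expand by (intro tendsto_intros assms)

lemma Dt_bound:
  assumes B: "\<And>i j. i < n \<Longrightarrow> j < n \<Longrightarrow> \<bar>v j i\<bar> \<le> B"
  shows "\<bar>Dt n v\<bar> \<le> fact n * B ^ n"
proof -
  have "\<bar>Dt n v\<bar> \<le> (\<Sum>p | p permutes {0..<n}. \<bar>of_int (sign p) * (\<Prod>i=0..<n. v (p i) i)\<bar>)"
    unfolding Dt_expand by (rule sum_abs)
  also have "\<dots> \<le> (\<Sum>p | p permutes {0..<n}. B ^ n)"
  proof (rule sum_mono)
    fix p assume p: "p \<in> {p. p permutes {0..<n}}"
    have "\<bar>of_int (sign p) * (\<Prod>i=0..<n. v (p i) i)\<bar> = (\<Prod>i=0..<n. \<bar>v (p i) i\<bar>)"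
      by (simp add: sign_def abs_prod)
    also have "\<dots> \<le> (\<Prod>i=0..<n. B)"
      by (rule prod_mono) (use p B in \<open>auto simp: permutes_in_image\<close>)
    finally show "\<bar>of_int (sign p) * (\<Prod>i=0..<n. v (p i) i)\<bar> \<le> B ^ n" by simp
  qed
  also have "\<dots> = fact n * B ^ n"
    using card_permutations[of "{0..<n}" n] by simp
  finally show ?thesis .
qed

lemma Dt_diag:
  "Dt n (\<lambda>j i. if i = j then t else 0) = t ^ n"
proof -
  have "matA n (\<lambda>j i. if i = j then t else 0) = t \<cdot>\<^sub>m 1\<^sub>m n"
    by (rule eq_matI) auto
  then show ?thesis unfolding Dt_def by simp
qed

lemma cram1:
  assumes i: "i < n" and l: "l < n"
  shows "(\<Sum>j<n. v j i * adj_mat (matA n v) $$ (j,l)) = (if i = l then Dt n v else 0)"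
proof -
  have "(matA n v * adj_mat (matA n v)) $$ (i,l) = (Dt n v \<cdot>\<^sub>m 1\<^sub>m n) $$ (i,l)"
    using adj_mat(2)[OF matA_carrier] by (simp add: Dt_def)
  moreover have "(matA n v * adj_mat (matA n v)) $$ (i,l) = (\<Sum>j<n. v j i * adj_mat (matA n v) $$ (j,l))"
    using adj_mat(1)[OF matA_carrier, of n v] i l
    by (auto simp: scalar_prod_def lessThan_atLeast0 intro!: sum.cong)
  ultimately show ?thesis using i l by simp
qed

lemma cram2:
  assumes j: "j < n" and l: "l < n"
  shows "(\<Sum>i<n. adj_mat (matA n v) $$ (j,i) * v l i) = (if j = l then Dt n v else 0)"
proof -
  have "(adj_mat (matA n v) * matA n v) $$ (j,l) = (Dt n v \<cdot>\<^sub>m 1\<^sub>m n) $$ (j,l)"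
    using adj_mat(3)[OF matA_carrier] by (simp add: Dt_def)
  moreover have "(adj_mat (matA n v) * matA n v) $$ (j,l) = (\<Sum>i<n. adj_mat (matA n v) $$ (j,i) * v l i)"
    using adj_mat(1)[OF matA_carrier, of n v] j l
    by (auto simp: scalar_prod_def lessThan_atLeast0 intro!: sum.cong)
  ultimately show ?thesis using j l by simp
qed

lemma cram3:
  assumes j: "j < n"
  shows "(\<Sum>i<n. adj_mat (matA n v) $$ (j,i) * x i) = Dt n (v(j := x))"
proof -
  let ?A = "matA n v" and ?B = "matA n (v(j := x))"
  have del: "mat_delete ?B i j = mat_delete ?A i j" for i
    by (rule eq_matI) (auto simp: mat_delete_def)
  have "Dt n (v(j := x)) = (\<Sum>i<n. ?B $$ (i,j) * cofactor ?B i j)"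
    unfolding Dt_def by (rule laplace_expansion_column[OF matA_carrier j])
  also have "\<dots> = (\<Sum>i<n. x i * cofactor ?A i j)"
    using j by (auto intro!: sum.cong simp: cofactor_def del)
  also have "\<dots> = (\<Sum>i<n. adj_mat ?A $$ (j,i) * x i)"
    using j by (auto intro!: sum.cong simp: adj_mat_def mult.commute)
  finally show ?thesis by simp
qed

lemma auerbach_max:
  assumes N: "is_norm_on n N" and n1: "n \<ge> 1"
  shows "\<exists>v. (\<forall>j<n. v j \<in> unit_ball_Y n N) \<and> Dt n v \<noteq> 0 \<and>
             (\<forall>w. (\<forall>j<n. w j \<in> unit_ball_Y n N) \<longrightarrow> \<bar>Dt n w\<bar> \<le> \<bar>Dt n v\<bar>)"
proof -
  obtain c where c: "c > 0" and cl: "\<And>y. y \<in> Rk n \<Longrightarrow> c * l1 n y \<le> N y"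
    using N_lower[OF N] by blast
  define Vs where "Vs = {w. \<forall>j<n. w j \<in> unit_ball_Y n N}"
  have ent: "\<bar>w j i\<bar> \<le> 1 / c" if "w \<in> Vs" "j < n" for w j i
  proof (cases "i < n")
    case True
    have wj: "w j \<in> Rk n" "N (w j) \<le> 1" using that by (auto simp: Vs_def unit_ball_Y_def)
    have "c * \<bar>w j i\<bar> \<le> c * l1 n (w j)" using coord_le_l1[OF True] c by simp
    also have "\<dots> \<le> 1" using cl[OF wj(1)] wj(2) by simp
    finally show ?thesis using c by (simp add: field_simps)
  next
    case False
    then have "w j i = 0" using that by (auto simp: Vs_def unit_ball_Y_def Rk_def)
    then show ?thesis using c by simp
  qed
  have bdd: "bdd_above ((\<lambda>w. \<bar>Dt n w\<bar>) ` Vs)"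
    by (rule bdd_aboveI2[of _ _ "fact n * (1/c)^n"]) (use ent in \<open>auto intro!: Dt_bound\<close>)
  have zV: "(\<lambda>j i. 0) \<in> Vs" unfolding Vs_def unit_ball_Y_def using N_zero[OF N] by auto
  then have Vne: "Vs \<noteq> {}" by blast
  define S where "S = (SUP w\<in>Vs. \<bar>Dt n w\<bar>)"
  have "\<exists>w. w \<in> Vs \<and> S - inverse (real (Suc m)) < \<bar>Dt n w\<bar>" for m
  proof -
    have "S - inverse (real (Suc m)) < S" by simp
    then show ?thesis unfolding S_def using less_cSUP_iff[OF Vne bdd] by blast
  qed
  then obtain W where W: "\<And>m. W m \<in> Vs" and WS: "\<And>m. S - inverse (real (Suc m)) < \<bar>Dt n (W m)\<bar>"
    using choice[of "\<lambda>m w. w \<in> Vs \<and> S - inverse (real (Suc m)) < \<bar>Dt n w\<bar>"] by blast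
  define W' where "W' m = (\<lambda>j. if j < n then W m j else (\<lambda>_. 0))" for m
  have W'V: "W' m \<in> Vs" for m using W[of m] unfolding W'_def Vs_def by auto
  have W'D: "Dt n (W' m) = Dt n (W m)" for m by (rule Dt_cong) (simp add: W'_def)
  have W'b: "norm ((\<lambda>m (p::nat\<times>nat). W' m (fst p) (snd p)) m p) \<le> 1 / c" for m p
  proof (cases "fst p < n")
    case True then show ?thesis using ent[OF W'V True] by simp
  next
    case False then show ?thesis using c by (simp add: W'_def)
  qed
  obtain r where r: "strict_mono r"
    and conv: "\<And>p. p \<in> UNIV \<Longrightarrow> \<exists>l. (\<lambda>m. W' (r m) (fst p) (snd p)) \<longlonglongrightarrow> l"
    by (rule function_convergent_subsequence[of "UNIV::(nat\<times>nat) set" "\<lambda>m p. W' m (fst p) (snd p)" "1/c"])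
       (use W'b in auto)
  have "\<exists>g. \<forall>p. (\<lambda>m. W' (r m) (fst p) (snd p)) \<longlonglongrightarrow> g p"
    by (rule choice) (use conv in blast)
  then obtain g where g: "\<And>p. (\<lambda>m. W' (r m) (fst p) (snd p)) \<longlonglongrightarrow> g p" by blast
  define v where "v j i = g (j, i)" for j i
  have vlim: "\<And>j i. (\<lambda>m. W' (r m) j i) \<longlonglongrightarrow> v j i" unfolding v_def using g by (metis fst_conv snd_conv)
  have vV: "v \<in> Vs" unfolding Vs_def
  proof (intro CollectI allI impI)
    fix j assume j: "j < n"
    have U: "W' (r m) j \<in> Rk n" "N (W' (r m) j) \<le> 1" for m
      using W'V[of "r m"] j by (auto simp: Vs_def unit_ball_Y_def)
    have "v j \<in> Rk n" by (rule limit_Rk[OF U(1)]) (rule vlim)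
    moreover have "N (v j) \<le> 1"
      by (rule limit_N_le[OF N U(1) vlim tendsto_const U(2)])
    ultimately show "v j \<in> unit_ball_Y n N" by (simp add: unit_ball_Y_def)
  qed
  have Dlim: "(\<lambda>m. \<bar>Dt n (W' (r m))\<bar>) \<longlonglongrightarrow> \<bar>Dt n v\<bar>"
    by (intro tendsto_intros Dt_tendsto vlim)
  have Slim: "(\<lambda>m. S - inverse (real (Suc (r m)))) \<longlonglongrightarrow> S - 0"
    using LIMSEQ_subseq_LIMSEQ[OF LIMSEQ_inverse_real_of_nat r]
    by (intro tendsto_intros) (simp add: o_def)
  have le: "S - inverse (real (Suc (r m))) \<le> \<bar>Dt n (W' (r m))\<bar>" for m
    using WS[of "r m"] W'D[of "r m"] by simp
  have "S - 0 \<le> \<bar>Dt n v\<bar>"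
    by (rule LIMSEQ_le[OF Slim Dlim]) (intro exI[of _ 0] allI impI le)
  then have Sv: "S \<le> \<bar>Dt n v\<bar>" by simp
  have upper: "\<bar>Dt n w\<bar> \<le> \<bar>Dt n v\<bar>" if "\<forall>j<n. w j \<in> unit_ball_Y n N" for w
  proof -
    have "\<bar>Dt n w\<bar> \<le> S" unfolding S_def by (rule cSUP_upper[OF _ bdd]) (use that in \<open>simp add: Vs_def\<close>)
    then show ?thesis using Sv by simp
  qed
  have "Dt n v \<noteq> 0"
  proof -
    have e0: "ev 0 \<in> Rk n" using n1 by (simp add: ev_Rk)
    have "N (ev 0) \<noteq> 0" using N_zero_iff[OF N e0] by (metis ev_def zero_neq_one)
    then have "N (ev 0) > 0" using N_nonneg[OF N e0] by simp
    moreover have "N (ev 0) \<le> Cu n N" unfolding Cu_def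
      by (rule member_le_sum) (use n1 in \<open>auto intro: N_nonneg[OF N] ev_Rk\<close>)
    ultimately have Cpos: "Cu n N > 0" by simp
    define t where "t = 1 / Cu n N"
    have tpos: "t > 0" using Cpos by (simp add: t_def)
    have v0V: "(\<lambda>j i. if i = j then t else 0) \<in> Vs" unfolding Vs_def unit_ball_Y_def
    proof (intro CollectI allI impI conjI)
      fix j assume j: "j < n"
      show "(\<lambda>i. if i = j then t else 0) \<in> Rk n" using j by (auto simp: Rk_def)
      have "(\<lambda>i. if i = j then t else 0) = (\<lambda>i. t * ev j i)" by (auto simp: ev_def)
      then have "N (\<lambda>i. if i = j then t else 0) = t * N (ev j)" using N_scale[OF N ev_Rk[OF j], of t] tpos by simp
      also have "\<dots> \<le> t * Cu n N" unfolding Cu_def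
        by (intro mult_left_mono member_le_sum) (use j tpos in \<open>auto intro: N_nonneg[OF N] ev_Rk\<close>)
      also have "\<dots> = 1" using Cpos by (simp add: t_def)
      finally show "N (\<lambda>i. if i = j then t else 0) \<le> 1" .
    qed
    have "\<bar>Dt n (\<lambda>j i. if i = j then t else 0)\<bar> \<le> S"
      unfolding S_def by (rule cSUP_upper[OF v0V bdd])
    moreover have "\<bar>Dt n (\<lambda>j i. if i = j then t else 0)\<bar> > 0" using tpos by (simp add: Dt_diag)
    ultimately show ?thesis using Sv by simp
  qed
  then show ?thesis using vV upper unfolding Vs_def by blast
qed

definition linf :: "nat \<Rightarrow> (nat \<Rightarrow> real) \<Rightarrow> real" where
  "linf n y = Max ((\<lambda>j. \<bar>y j\<bar>) ` {..<n})"

definition fam :: "nat \<Rightarrow> ((nat \<Rightarrow> real) \<Rightarrow> real) \<Rightarrow> bool" where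
  "fam n M \<longleftrightarrow> (\<forall>c. \<forall>y\<in>Rk n. M (\<lambda>i. c * y i) = \<bar>c\<bar> * M y) \<and>
     (\<forall>y\<in>Rk n. \<forall>z\<in>Rk n. M (\<lambda>i. y i + z i) \<le> M y + M z) \<and>
     (\<forall>y\<in>Rk n. linf n y \<le> M y \<and> M y \<le> l1 n y)"

lemma linf_ge: "n \<ge> 1 \<Longrightarrow> j < n \<Longrightarrow> \<bar>y j\<bar> \<le> linf n y"
  unfolding linf_def by (rule Max_ge) auto

lemma fam_norm:
  assumes n1: "n \<ge> 1" and M: "fam n M"
  shows "is_norm_on n M"
  unfolding is_norm_on_def
proof (intro conjI ballI allI)
  fix y assume y: "y \<in> Rk n"
  have b: "linf n y \<le> M y" "M y \<le> l1 n y" using M y by (auto simp: fam_def)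
  have "0 \<le> linf n y" using linf_ge[OF n1, of 0 y] n1 by simp
  then show "0 \<le> M y" using b by simp
  show "M y = 0 \<longleftrightarrow> y = (\<lambda>_. 0)"
  proof
    assume "M y = 0"
    show "y = (\<lambda>_. 0)"
    proof
      fix i show "y i = 0"
      proof (cases "i < n")
        case True then show ?thesis using linf_ge[OF n1 True, of y] b \<open>M y = 0\<close> by simp
      next
        case False then show ?thesis using y by (auto simp: Rk_def)
      qed
    qed
  next
    assume "y = (\<lambda>_. 0)"
    then have "l1 n y = 0" by (simp add: l1_def)
    then show "M y = 0" using b \<open>0 \<le> linf n y\<close> by simp
  qed
next
  fix c y assume "y \<in> Rk n" then show "M (\<lambda>i. c * y i) = \<bar>c\<bar> * M y" using M by (simp add: fam_def)
next
  fix y z assume "y \<in> Rk n" "z \<in> Rk n" then show "M (\<lambda>i. y i + z i) \<le> M y + M z" using M by (simp add: fam_def)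
qed

lemma auerbach:
  fixes K :: "'a::real_normed_vector set"
  assumes N: "is_norm_on n N" and n1: "n \<ge> 1"
  shows "\<exists>M. fam n M \<and> fixed_lip_width \<gamma> K n M \<le> fixed_lip_width \<gamma> K n N"
proof -
  obtain v where vB: "\<And>j. j < n \<Longrightarrow> v j \<in> unit_ball_Y n N" and d0: "Dt n v \<noteq> 0"
    and vmax: "\<And>w. (\<forall>j<n. w j \<in> unit_ball_Y n N) \<Longrightarrow> \<bar>Dt n w\<bar> \<le> \<bar>Dt n v\<bar>"
    using auerbach_max[OF N n1] by blast
  have vR: "v j \<in> Rk n" and vN: "N (v j) \<le> 1" if "j < n" for j using vB[OF that] by (auto simp: unit_ball_Y_def)
  define d where "d = Dt n v"
  define adj where "adj = adj_mat (matA n v)"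
  define T where "T y = (\<lambda>i. \<Sum>j<n. y j * v j i)" for y
  define coef where "coef x = (\<lambda>j. if j < n then (\<Sum>i<n. adj $$ (j,i) * x i) / d else 0)" for x
  have TR: "T y \<in> Rk n" for y unfolding T_def by (rule lin_comb_Rk) (use vR in auto)
  have F1: "T (coef x) = x" if x: "x \<in> Rk n" for x
  proof
    fix i
    show "T (coef x) i = x i"
    proof (cases "i < n")
      case True
      have "T (coef x) i = (\<Sum>j<n. ((\<Sum>l<n. adj $$ (j,l) * x l) / d) * v j i)"
        unfolding T_def coef_def by (rule sum.cong) auto
      also have "\<dots> = (\<Sum>j<n. \<Sum>l<n. v j i * adj $$ (j,l) * x l) / d"
        by (simp add: sum_divide_distrib sum_distrib_left sum_distrib_right mult_ac)
      also have "(\<Sum>j<n. \<Sum>l<n. v j i * adj $$ (j,l) * x l) = (\<Sum>l<n. \<Sum>j<n. v j i * adj $$ (j,l) * x l)"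
        by (rule sum.swap)
      also have "\<dots> = (\<Sum>l<n. (\<Sum>j<n. v j i * adj $$ (j,l)) * x l)"
        by (simp add: sum_distrib_right)
      also have "\<dots> = (\<Sum>l<n. (if i = l then d else 0) * x l)"
        unfolding adj_def d_def by (rule sum.cong) (use True cram1 in auto)
      also have "\<dots> = (\<Sum>l<n. if l = i then d * x l else 0)" by (rule sum.cong) auto
      also have "\<dots> = d * x i" using True by (simp add: sum.delta)
      finally show ?thesis using d0 by (simp add: d_def)
    next
      case False
      then show ?thesis using x vR unfolding T_def by (auto simp: Rk_def)
    qed
  qed
  have F2: "coef (T y) j = y j" if j: "j < n" for y j
  proof -
    have "(\<Sum>i<n. adj $$ (j,i) * T y i) = (\<Sum>i<n. \<Sum>l<n. y l * (adj $$ (j,i) * v l i))"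
      unfolding T_def by (simp add: sum_distrib_left mult_ac)
    also have "\<dots> = (\<Sum>l<n. \<Sum>i<n. y l * (adj $$ (j,i) * v l i))" by (rule sum.swap)
    also have "\<dots> = (\<Sum>l<n. y l * (\<Sum>i<n. adj $$ (j,i) * v l i))" by (simp add: sum_distrib_left)
    also have "\<dots> = (\<Sum>l<n. y l * (if j = l then d else 0))"
      unfolding adj_def d_def by (rule sum.cong) (use j cram2 in auto)
    also have "\<dots> = y j * d" using j by (simp add: if_distrib sum.delta cong: if_cong)
    finally show ?thesis using j d0 unfolding coef_def by (simp add: d_def)
  qed
  have F3: "\<bar>coef x j\<bar> \<le> N x" if x: "x \<in> Rk n" and j: "j < n" for x j
  proof (cases "x = (\<lambda>_. 0)")
    case True then show ?thesis unfolding coef_def using N_zero[OF N] by simp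
  next
    case False
    define t where "t = N x"
    have tpos: "t > 0" using False N_zero_iff[OF N x] N_nonneg[OF N x] unfolding t_def by simp
    define x' where "x' = (\<lambda>i. x i / t)"
    have x'B: "x' \<in> unit_ball_Y n N"
      unfolding x'_def unit_ball_Y_def using N_div[OF N x, of t] tpos x by (simp add: t_def)
    have "\<forall>j'<n. (v(j := x')) j' \<in> unit_ball_Y n N" using x'B vB by auto
    then have le: "\<bar>Dt n (v(j := x'))\<bar> \<le> \<bar>d\<bar>" unfolding d_def by (rule vmax)
    have "(\<Sum>i<n. adj $$ (j,i) * x' i) = (\<Sum>i<n. adj $$ (j,i) * x i) / t"
      unfolding x'_def by (simp add: sum_divide_distrib)
    moreover have "(\<Sum>i<n. adj $$ (j,i) * x' i) = Dt n (v(j := x'))"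
      unfolding adj_def by (rule cram3[OF j])
    ultimately have "\<bar>(\<Sum>i<n. adj $$ (j,i) * x i)\<bar> / t \<le> \<bar>d\<bar>" using le tpos by simp
    then have "\<bar>(\<Sum>i<n. adj $$ (j,i) * x i)\<bar> / \<bar>d\<bar> \<le> t"
      using tpos d0 by (simp add: divide_le_eq mult.commute d_def)
    then show ?thesis unfolding coef_def t_def using j by (simp add: abs_divide)
  qed
  define M where "M y = N (T y)" for y
  have Tscale: "T (\<lambda>i. c * y i) = (\<lambda>i. c * T y i)" for c y
    unfolding T_def by (simp add: sum_distrib_left mult_ac)
  have Tadd: "T (\<lambda>i. y i + z i) = (\<lambda>i. T y i + T z i)" for y z
    unfolding T_def by (simp add: sum.distrib distrib_right)
  have Tdiff: "T (\<lambda>i. y i - z i) = (\<lambda>i. T y i - T z i)" for y z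
    unfolding T_def by (simp add: sum_subtractf left_diff_distrib)
  have famM: "fam n M" unfolding fam_def
  proof (intro conjI ballI allI)
    fix c y show "M (\<lambda>i. c * y i) = \<bar>c\<bar> * M y" unfolding M_def Tscale by (rule N_scale[OF N TR])
  next
    fix y z show "M (\<lambda>i. y i + z i) \<le> M y + M z" unfolding M_def Tadd by (rule N_tri[OF N TR TR])
  next
    fix y assume y: "y \<in> Rk n"
    have "linf n y \<le> M y" unfolding linf_def
    proof (rule Max.boundedI)
      have "0 \<in> {..<n}" using n1 by simp
      then show "(\<lambda>j. \<bar>y j\<bar>) ` {..<n} \<noteq> {}" by blast
    next
      fix a assume "a \<in> (\<lambda>j. \<bar>y j\<bar>) ` {..<n}"
      then obtain j where j: "j < n" and a: "a = \<bar>y j\<bar>" by auto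
      show "a \<le> M y" unfolding a M_def using F3[OF TR j, of y] F2[OF j, of y] by simp
    qed simp
    moreover have "M y \<le> l1 n y"
    proof -
      have "M y \<le> (\<Sum>j<n. \<bar>y j\<bar> * N (v j))" unfolding M_def T_def
        by (rule lin_comb_le[OF N]) (use vR in auto)
      also have "\<dots> \<le> (\<Sum>j<n. \<bar>y j\<bar>)"
        by (rule sum_mono) (use vN in \<open>simp add: mult_left_le\<close>)
      finally show ?thesis by (simp add: l1_def)
    qed
    ultimately show "linf n y \<le> M y" "M y \<le> l1 n y" by simp_all
  qed
  have "fixed_lip_width \<gamma> K n M \<le> fixed_lip_width \<gamma> K n N + ennreal 0"
  proof (rule width_le)
    fix \<Phi> :: "(nat\<Rightarrow>real)\<Rightarrow>'a" assume \<Phi>: "\<Phi> \<in> lip_maps \<gamma> n N"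
    have inN: "T y \<in> unit_ball_Y n N" if "y \<in> unit_ball_Y n M" for y
      using that TR by (auto simp: unit_ball_Y_def M_def)
    have "\<Phi> \<circ> T \<in> lip_maps \<gamma> n M"
      unfolding lip_maps_def mem_Collect_eq
    proof (intro ballI)
      fix y y' assume y: "y \<in> unit_ball_Y n M" and y': "y' \<in> unit_ball_Y n M"
      have "norm (\<Phi> (T y) - \<Phi> (T y')) \<le> \<gamma> * N (\<lambda>i. T y i - T y' i)"
        using \<Phi> inN[OF y] inN[OF y'] unfolding lip_maps_def by blast
      then show "norm ((\<Phi> \<circ> T) y - (\<Phi> \<circ> T) y') \<le> \<gamma> * M (\<lambda>i. y i - y' i)"
        unfolding M_def Tdiff by simp
    qed
    moreover have "\<exists>y\<in>unit_ball_Y n M. norm ((\<Phi> \<circ> T) y - \<Phi> z) \<le> 0" if z: "z \<in> unit_ball_Y n N" for z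
    proof -
      have zz: "z \<in> Rk n" "N z \<le> 1" using z by (auto simp: unit_ball_Y_def)
      have cR: "coef z \<in> Rk n" by (auto simp: Rk_def coef_def)
      have "coef z \<in> unit_ball_Y n M" using cR zz F1[OF zz(1)] by (simp add: unit_ball_Y_def M_def)
      then show ?thesis using F1[OF zz(1)] by (intro bexI[of _ "coef z"]) auto
    qed
    ultimately show "\<exists>\<Psi>\<in>lip_maps \<gamma> n M. \<forall>z\<in>unit_ball_Y n N. \<exists>y\<in>unit_ball_Y n M. norm (\<Psi> y - \<Phi> z) \<le> 0"
      by blast
  qed
  then show ?thesis using famM by auto
qed

definition Pts :: "nat \<Rightarrow> real set" where
  "Pts K = (\<lambda>j::int. real_of_int j / real (Suc K)) ` {- int (K * Suc K) .. int (K * Suc K)}"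

definition gr :: "nat \<Rightarrow> nat \<Rightarrow> (nat \<Rightarrow> real) set" where
  "gr n K = (\<lambda>f i. if i < n then f i else 0) ` ({..<n} \<rightarrow>\<^sub>E Pts K)"

lemma Pts_finite: "finite (Pts K)" unfolding Pts_def by (rule finite_imageI) simp

lemma gr_finite: "finite (gr n K)"
  unfolding gr_def by (rule finite_imageI, rule finite_PiE) (simp_all add: Pts_finite)

lemma gr_Rk: "gr n K \<subseteq> Rk n" unfolding gr_def by (rule image_subsetI) (simp add: Rk_def)

lemma approx_coord:
  assumes "\<bar>x\<bar> \<le> real K"
  shows "\<exists>p\<in>Pts K. \<bar>x - p\<bar> \<le> 1 / real (Suc K)"
proof -
  define s where "s = real (Suc K)"
  have s: "s > 0" by (simp add: s_def)
  define j where "j = (if x \<ge> 0 then floor (x * s) else ceiling (x * s))"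
  have "\<bar>x * s\<bar> = \<bar>x\<bar> * s" using s by (simp add: abs_mult)
  also have "\<dots> \<le> real K * s" by (rule mult_right_mono[OF assms]) (use s in simp)
  also have "real K * s = real (K * Suc K)" by (simp add: s_def algebra_simps)
  finally have xs: "\<bar>x * s\<bar> \<le> real (K * Suc K)" .
  have j12: "\<bar>real_of_int j\<bar> \<le> \<bar>x * s\<bar> \<and> \<bar>x * s - real_of_int j\<bar> \<le> 1"
  proof (cases "x \<ge> 0")
    case True
    then have xs0: "0 \<le> x * s" using s by simp
    have a: "real_of_int \<lfloor>x * s\<rfloor> \<le> x * s" "x * s < real_of_int \<lfloor>x * s\<rfloor> + 1"
      using floor_correct[of "x * s"] by linarith+
    have b: "0 \<le> real_of_int \<lfloor>x * s\<rfloor>" using xs0 by simp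
    have jj: "j = \<lfloor>x * s\<rfloor>" using True by (simp add: j_def)
    show ?thesis unfolding jj using a b xs0 by (smt (verit))
  next
    case False
    then have xs0: "x * s \<le> 0" using s by (simp add: mult_nonpos_nonneg)
    have a: "x * s \<le> real_of_int \<lceil>x * s\<rceil>" "real_of_int \<lceil>x * s\<rceil> < x * s + 1"
      using ceiling_correct[of "x * s"] by linarith+
    have b: "real_of_int \<lceil>x * s\<rceil> \<le> 0" using xs0 by simp
    have jj: "j = \<lceil>x * s\<rceil>" using False by (simp add: j_def)
    show ?thesis unfolding jj using a b xs0 by (smt (verit))
  qed
  then have j1: "\<bar>real_of_int j\<bar> \<le> \<bar>x * s\<bar>" and j2: "\<bar>x * s - real_of_int j\<bar> \<le> 1" by auto
  have "\<bar>real_of_int j\<bar> \<le> real (K * Suc K)" using j1 xs by linarith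
  then have "real_of_int \<bar>j\<bar> \<le> real_of_int (int (K * Suc K))" by simp
  then have "\<bar>j\<bar> \<le> int (K * Suc K)" by (simp only: of_int_le_iff)
  then have jin: "j \<in> {- int (K * Suc K) .. int (K * Suc K)}" by (simp only: atLeastAtMost_iff) arith
  have "\<bar>x - real_of_int j / s\<bar> = \<bar>x * s - real_of_int j\<bar> / s" using s
    by (simp add: field_simps abs_divide)
  also have "\<dots> \<le> 1 / s" using j2 s by (simp add: divide_right_mono)
  finally show ?thesis using jin unfolding Pts_def s_def by blast
qed

lemma approx_grid:
  assumes y: "y \<in> Rk n" and b: "\<And>i. i < n \<Longrightarrow> \<bar>y i\<bar> \<le> real K"
  shows "\<exists>q\<in>gr n K. l1 n (\<lambda>i. y i - q i) \<le> real n / real (Suc K)"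
proof -
  have ex: "\<forall>i\<in>{..<n}. \<exists>p. p \<in> Pts K \<and> \<bar>y i - p\<bar> \<le> 1 / real (Suc K)"
    using approx_coord b by blast
  obtain P where P0: "\<forall>i\<in>{..<n}. P i \<in> Pts K \<and> \<bar>y i - P i\<bar> \<le> 1 / real (Suc K)"
    using bchoice[OF ex] by blast
  have P: "P i \<in> Pts K \<and> \<bar>y i - P i\<bar> \<le> 1 / real (Suc K)" if "i < n" for i
    using P0 that by simp
  define f where "f = restrict P {..<n}"
  have f: "f \<in> {..<n} \<rightarrow>\<^sub>E Pts K" using P unfolding f_def by auto
  define q where "q = (\<lambda>i. if i < n then f i else 0)"
  have q: "q \<in> gr n K" unfolding gr_def q_def using f by blast
  have "l1 n (\<lambda>i. y i - q i) \<le> (\<Sum>i<n. 1 / real (Suc K))"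
    unfolding l1_def by (rule sum_mono) (use P in \<open>simp add: q_def f_def\<close>)
  also have "\<dots> = real n / real (Suc K)" by simp
  finally show ?thesis using q by blast
qed

lemma fam_lip:
  assumes n1: "n \<ge> 1" and M: "fam n M" and y: "y \<in> Rk n" and q: "q \<in> Rk n"
  shows "\<bar>M y - M q\<bar> \<le> l1 n (\<lambda>i. y i - q i)"
proof -
  have N: "is_norm_on n M" by (rule fam_norm[OF n1 M])
  have "M (\<lambda>i. y i - q i) \<le> l1 n (\<lambda>i. y i - q i)" using M y q by (simp add: fam_def)
  moreover have "M y \<le> M q + M (\<lambda>i. y i - q i)" by (rule N_sub[OF N y q])
  moreover have "M q \<le> M y + M (\<lambda>i. q i - y i)" by (rule N_sub[OF N q y])
  moreover have "M (\<lambda>i. q i - y i) = M (\<lambda>i. y i - q i)" by (rule N_sym[OF N q y])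
  ultimately show ?thesis by linarith
qed

lemma l1_le_linf: "n \<ge> 1 \<Longrightarrow> l1 n y \<le> real n * linf n y"
proof -
  assume n1: "n \<ge> 1"
  have "l1 n y \<le> (\<Sum>j<n. linf n y)" unfolding l1_def by (rule sum_mono) (use linf_ge[OF n1] in auto)
  then show ?thesis by simp
qed

lemma fam_l1: "n \<ge> 1 \<Longrightarrow> fam n (l1 n)"
  unfolding fam_def
proof (intro conjI ballI allI)
  fix c y show "l1 n (\<lambda>i. c * y i) = \<bar>c\<bar> * l1 n y" by (simp add: l1_def abs_mult sum_distrib_left)
next
  fix y z show "l1 n (\<lambda>i. y i + z i) \<le> l1 n y + l1 n z"
    unfolding l1_def by (simp add: sum.distrib[symmetric] sum_mono abs_triangle_ineq)
next
  fix y :: "nat \<Rightarrow> real" assume "n \<ge> 1"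
  then have "0 \<in> {..<n}" by simp
  then have ne: "(\<lambda>j. \<bar>y j\<bar>) ` {..<n} \<noteq> {}" by blast
  show "linf n y \<le> l1 n y" unfolding linf_def
    by (rule Max.boundedI[OF _ ne]) (use coord_le_l1 in auto)
  show "l1 n y \<le> l1 n y" by simp
qed

lemma
  assumes "fam n M"
  shows fam_homog: "y \<in> Rk n \<Longrightarrow> M (\<lambda>i. c * y i) = \<bar>c\<bar> * M y"
    and fam_tri: "y \<in> Rk n \<Longrightarrow> z \<in> Rk n \<Longrightarrow> M (\<lambda>i. y i + z i) \<le> M y + M z"
    and fam_lo: "y \<in> Rk n \<Longrightarrow> linf n y \<le> M y"
    and fam_up: "y \<in> Rk n \<Longrightarrow> M y \<le> l1 n y"
  using assms unfolding fam_def by auto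

lemma abs3: "\<bar>a - c\<bar> \<le> d1 \<Longrightarrow> \<bar>c - c'\<bar> < d2 \<Longrightarrow> \<bar>b - c'\<bar> \<le> d3 \<Longrightarrow> \<bar>a - (b::real)\<bar> < d1 + d2 + d3"
  by linarith

lemma abs3': "\<bar>a - c\<bar> \<le> d1 \<Longrightarrow> \<bar>c - c'\<bar> < d2 \<Longrightarrow> \<bar>b - c'\<bar> \<le> d3 \<Longrightarrow> \<bar>a - (b::real)\<bar> \<le> d1 + d2 + d3"
  by linarith

lemma linf_nonneg: "n \<ge> 1 \<Longrightarrow> 0 \<le> linf n y"
  using linf_ge[of n 0 y] by simp

lemma fam_nonneg: "n \<ge> 1 \<Longrightarrow> fam n M \<Longrightarrow> y \<in> Rk n \<Longrightarrow> 0 \<le> M y"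
  using fam_lo linf_nonneg by (meson order.trans)

lemma l1_div: "l1 n (\<lambda>i. y i / t) = l1 n y / \<bar>t\<bar>"
  unfolding l1_def by (simp add: abs_divide sum_divide_distrib)

lemma l1_zero: assumes y: "y \<in> Rk n" and l: "l1 n y = 0" shows "y = (\<lambda>_. 0)"
proof
  fix i
  show "y i = 0"
  proof (cases "i < n")
    case True then show ?thesis using coord_le_l1[OF True, of y] l by simp
  next
    case False then show ?thesis using y by (auto simp: Rk_def)
  qed
qed

lemma fam_compact:
  fixes Ms :: "nat \<Rightarrow> (nat \<Rightarrow> real) \<Rightarrow> real"
  assumes n1: "n \<ge> 1" and Ms: "\<And>m. fam n (Ms m)"
  shows "\<exists>(r::nat \<Rightarrow> nat) M. strict_mono r \<and> fam n M \<and>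
           (\<forall>e>0. \<exists>m0. \<forall>m\<ge>m0. \<forall>y\<in>Rk n. \<bar>Ms (r m) y - M y\<bar> \<le> e * l1 n y)"
proof -
  define S where "S = (\<Union>K. gr n K)"
  have cS: "countable S" unfolding S_def
    by (rule countable_UN[OF countableI_type]) (rule countable_finite[OF gr_finite])
  have SR: "S \<subseteq> Rk n" using gr_Rk unfolding S_def by blast
  define f where "f m y = Ms m y / (1 + l1 n y)" for m y
  have fb: "norm (f m y) \<le> 1" if "y \<in> S" for m y
  proof -
    have y: "y \<in> Rk n" using that SR by blast
    have "0 \<le> Ms m y" "Ms m y \<le> l1 n y" using fam_nonneg[OF n1 Ms y] fam_up[OF Ms y] by auto
    moreover have "0 \<le> l1 n y" by (rule l1_nonneg)
    ultimately show ?thesis unfolding f_def by (simp add: abs_divide divide_le_eq)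
  qed
  obtain r where r: "strict_mono r" and conv: "\<And>y. y \<in> S \<Longrightarrow> \<exists>l. (\<lambda>m. f (r m) y) \<longlonglongrightarrow> l"
    by (rule function_convergent_subsequence[of S f 1]) (use cS fb in auto)
  have convS: "convergent (\<lambda>m. Ms (r m) y)" if yS: "y \<in> S" for y
  proof -
    obtain l where l: "(\<lambda>m. f (r m) y) \<longlonglongrightarrow> l" using conv[OF yS] by blast
    have "(\<lambda>m. f (r m) y * (1 + l1 n y)) \<longlonglongrightarrow> l * (1 + l1 n y)" by (intro tendsto_intros l)
    moreover have "f (r m) y * (1 + l1 n y) = Ms (r m) y" for m
      unfolding f_def using l1_nonneg[of n y] by simp
    ultimately show ?thesis by (auto simp: convergent_def)
  qed
  have near: "\<exists>K::nat. real K \<ge> a \<and> real n / real (Suc K) < e" if e: "e > 0" for a e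
  proof -
    obtain K :: nat where K: "max a (real n / e) < real K" using reals_Archimedean2 by blast
    have "real n / e < real (Suc K)" using K by simp
    then have "real n < e * real (Suc K)" using e by (simp add: divide_less_eq mult.commute)
    then have "real n / real (Suc K) < e" by (simp add: divide_less_eq mult.commute)
    then show ?thesis using K by (intro exI[of _ K]) auto
  qed
  have cauchy: "Cauchy (\<lambda>m. Ms (r m) y)" if y: "y \<in> Rk n" for y
  proof (rule CauchyI)
    fix e :: real assume e: "e > 0"
    obtain K :: nat where K1: "real K \<ge> l1 n y" and K2: "real n / real (Suc K) < e / 3"
      using near[of "e/3" "l1 n y"] e by auto
    obtain q where q: "q \<in> gr n K" and ql: "l1 n (\<lambda>i. y i - q i) \<le> real n / real (Suc K)"
      using approx_grid[OF y, of K] coord_le_l1 K1 by (meson order.trans)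
    have qS: "q \<in> S" using q unfolding S_def by blast
    have qR: "q \<in> Rk n" using qS SR by blast
    have "Cauchy (\<lambda>m. Ms (r m) q)" using convS[OF qS] by (simp add: Cauchy_convergent_iff)
    then obtain N where N: "\<And>a b. a \<ge> N \<Longrightarrow> b \<ge> N \<Longrightarrow> \<bar>Ms (r a) q - Ms (r b) q\<bar> < e / 3"
      using e unfolding Cauchy_def dist_real_def by (meson divide_pos_pos zero_less_numeral)
    show "\<exists>N. \<forall>a\<ge>N. \<forall>b\<ge>N. norm (Ms (r a) y - Ms (r b) y) < e"
    proof (intro exI allI impI)
      fix a b assume a: "a \<ge> N" and b: "b \<ge> N"
      have "\<bar>Ms (r a) y - Ms (r a) q\<bar> \<le> l1 n (\<lambda>i. y i - q i)" by (rule fam_lip[OF n1 Ms y qR])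
      moreover have "\<bar>Ms (r b) y - Ms (r b) q\<bar> \<le> l1 n (\<lambda>i. y i - q i)" by (rule fam_lip[OF n1 Ms y qR])
      moreover note N[OF a b] ql K2
      ultimately have "\<bar>Ms (r a) y - Ms (r b) y\<bar> < l1 n (\<lambda>i. y i - q i) + e / 3 + l1 n (\<lambda>i. y i - q i)"
        using abs3 by blast
      then show "norm (Ms (r a) y - Ms (r b) y) < e" using ql K2 by simp
    qed
  qed
  define M where "M y = lim (\<lambda>m. Ms (r m) y)" for y
  have lim: "(\<lambda>m. Ms (r m) y) \<longlonglongrightarrow> M y" if "y \<in> Rk n" for y
    unfolding M_def using cauchy[OF that] by (simp add: Cauchy_convergent_iff convergent_LIMSEQ_iff)
  have famM: "fam n M" unfolding fam_def
  proof (intro conjI ballI allI)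
    fix c y assume y: "y \<in> Rk n"
    have "(\<lambda>m. Ms (r m) (\<lambda>i. c * y i)) \<longlonglongrightarrow> M (\<lambda>i. c * y i)" by (rule lim) (simp add: y)
    moreover have "(\<lambda>m. Ms (r m) (\<lambda>i. c * y i)) = (\<lambda>m. \<bar>c\<bar> * Ms (r m) y)"
      using fam_homog[OF Ms y] by simp
    moreover have "(\<lambda>m. \<bar>c\<bar> * Ms (r m) y) \<longlonglongrightarrow> \<bar>c\<bar> * M y" by (intro tendsto_intros lim y)
    ultimately show "M (\<lambda>i. c * y i) = \<bar>c\<bar> * M y" using LIMSEQ_unique by metis
  next
    fix y z assume y: "y \<in> Rk n" and z: "z \<in> Rk n"
    have l1: "(\<lambda>m. Ms (r m) (\<lambda>i. y i + z i)) \<longlonglongrightarrow> M (\<lambda>i. y i + z i)" by (rule lim) (simp add: y z)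
    have l2: "(\<lambda>m. Ms (r m) y + Ms (r m) z) \<longlonglongrightarrow> M y + M z" by (intro tendsto_intros lim y z)
    show "M (\<lambda>i. y i + z i) \<le> M y + M z"
      by (rule LIMSEQ_le[OF l1 l2]) (use fam_tri[OF Ms y z] in auto)
  next
    fix y assume y: "y \<in> Rk n"
    show "linf n y \<le> M y" by (rule LIMSEQ_le_const[OF lim[OF y]]) (use fam_lo[OF Ms y] in auto)
    show "M y \<le> l1 n y" by (rule LIMSEQ_le_const2[OF lim[OF y]]) (use fam_up[OF Ms y] in auto)
  qed
  have unif: "\<exists>m0. \<forall>m\<ge>m0. \<forall>y\<in>Rk n. \<bar>Ms (r m) y - M y\<bar> \<le> e * l1 n y" if e: "e > 0" for e
  proof -
    obtain K :: nat where K1: "real K \<ge> 1" and K2: "real n / real (Suc K) < e / 3"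
      using near[of "e/3" 1] e by auto
    have "\<forall>q\<in>gr n K. eventually (\<lambda>m. dist (Ms (r m) q) (M q) < e / 3) sequentially"
    proof
      fix q assume "q \<in> gr n K"
      then have qR: "q \<in> Rk n" using gr_Rk by blast
      have e3: "e / 3 > 0" using e by simp
      show "eventually (\<lambda>m. dist (Ms (r m) q) (M q) < e / 3) sequentially"
        using tendsto_iff[THEN iffD1, rule_format, OF lim[OF qR] e3] .
    qed
    then have "eventually (\<lambda>m. \<forall>q\<in>gr n K. dist (Ms (r m) q) (M q) < e / 3) sequentially"
      by (rule eventually_ball_finite[OF gr_finite])
    then obtain m0 where m0: "\<And>m q. m \<ge> m0 \<Longrightarrow> q \<in> gr n K \<Longrightarrow> \<bar>Ms (r m) q - M q\<bar> < e / 3"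
      unfolding eventually_sequentially dist_real_def by blast
    show ?thesis
    proof (intro exI allI impI ballI)
      fix m y assume m: "m \<ge> m0" and y: "y \<in> Rk n"
      show "\<bar>Ms (r m) y - M y\<bar> \<le> e * l1 n y"
      proof (cases "l1 n y = 0")
        case True
        then have "Ms (r m) y = 0" "M y = 0"
          using fam_nonneg[OF n1 Ms y, of "r m"] fam_up[OF Ms y, of "r m"] fam_nonneg[OF n1 famM y] fam_up[OF famM y]
          by auto
        then show ?thesis using True by simp
      next
        case False
        define t where "t = l1 n y"
        have tpos: "t > 0" using False l1_nonneg[of n y] unfolding t_def by simp
        define u where "u = (\<lambda>i. y i / t)"
        have uR: "u \<in> Rk n" unfolding u_def using y by simp
        have ul: "l1 n u = 1" unfolding u_def l1_div using tpos by (simp add: t_def)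
        obtain q where q: "q \<in> gr n K" and ql: "l1 n (\<lambda>i. u i - q i) \<le> real n / real (Suc K)"
          using approx_grid[OF uR, of K] coord_le_l1[of _ n u] ul K1 by (smt (verit))
        have qR: "q \<in> Rk n" using q gr_Rk by blast
        have "\<bar>Ms (r m) u - Ms (r m) q\<bar> \<le> l1 n (\<lambda>i. u i - q i)" by (rule fam_lip[OF n1 Ms uR qR])
        moreover have "\<bar>M u - M q\<bar> \<le> l1 n (\<lambda>i. u i - q i)" by (rule fam_lip[OF n1 famM uR qR])
        moreover note m0[OF m q] ql K2
        ultimately have "\<bar>Ms (r m) u - M u\<bar> \<le> l1 n (\<lambda>i. u i - q i) + e / 3 + l1 n (\<lambda>i. u i - q i)"
          using abs3' by blast
        then have du: "\<bar>Ms (r m) u - M u\<bar> \<le> e" using ql K2 by simp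
        have yu: "y = (\<lambda>i. t * u i)" unfolding u_def using tpos by auto
        have "Ms (r m) y = t * Ms (r m) u" "M y = t * M u"
          using fam_homog[OF Ms uR, of "r m" t] fam_homog[OF famM uR, of t] tpos yu by auto
        then have "\<bar>Ms (r m) y - M y\<bar> = t * \<bar>Ms (r m) u - M u\<bar>"
          using tpos by (simp add: right_diff_distrib[symmetric] abs_mult)
        also have "\<dots> \<le> t * e" using du tpos by simp
        finally show ?thesis by (simp add: t_def mult.commute)
      qed
    qed
  qed
  have U: "\<forall>e>0. \<exists>m0. \<forall>m\<ge>m0. \<forall>y\<in>Rk n. \<bar>Ms (r m) y - M y\<bar> \<le> e * l1 n y"
    using unif by blast
  show ?thesis by (rule exI[of _ r], rule exI[of _ M]) (use r famM U in blast)
qed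

lemma c_bound:
  fixes c :: real assumes c: "c \<ge> 1" shows "1 - 1 / c^2 \<le> 2 * (c - 1)"
proof -
  have c0: "c > 0" using c by simp
  have "c * 1 \<le> c * c" using c c0 by (intro mult_left_mono) auto
  then have "c + 1 \<le> 2 * (c * c)" using c by linarith
  then have "(c - 1) * (c + 1) \<le> (c - 1) * (2 * (c * c))" using c by (intro mult_left_mono) auto
  then have "c * c - 1 \<le> 2 * (c - 1) * (c * c)" by (simp add: algebra_simps)
  moreover have "c * c > 0" using c0 by simp
  ultimately have "(c * c - 1) / (c * c) \<le> 2 * (c - 1)" by (simp add: divide_le_eq)
  moreover have "(c * c - 1) / (c * c) = 1 - 1 / c^2" using c0 by (simp add: field_simps power2_eq_square)
  ultimately show ?thesis by simp
qed

lemma minimizer: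
  fixes K :: "'a::real_normed_vector set"
  assumes n1: "n \<ge> 1" and g: "\<gamma> \<ge> 0"
  shows "\<exists>M. fam n M \<and> (\<forall>M'. fam n M' \<longrightarrow> fixed_lip_width \<gamma> K n M \<le> fixed_lip_width \<gamma> K n M')"
proof -
  define Wd where "Wd M = fixed_lip_width \<gamma> K n M" for M
  define L where "L = (INF M\<in>{M. fam n M}. Wd M)"
  have Llow: "L \<le> Wd M'" if "fam n M'" for M' unfolding L_def by (rule INF_lower) (use that in simp)
  show ?thesis
  proof (cases "L = top_class.top")
    case True
    then have "Wd M' = top_class.top" if "fam n M'" for M' using Llow[OF that] by (simp add: top_unique)
    then have "\<forall>M'. fam n M' \<longrightarrow> Wd (l1 n) \<le> Wd M'" by simp
    then show ?thesis using fam_l1[OF n1] unfolding Wd_def by blast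
  next
    case False
    then have Lt: "L < top_class.top" by (simp add: less_top)
    have "\<exists>M. fam n M \<and> Wd M < L + ennreal (inverse (real (Suc m)))" for m
    proof -
      define X where "X = L + ennreal (inverse (real (Suc m)))"
      have "L < X" unfolding X_def using Lt by simp
      then have "Inf (Wd ` {M. fam n M}) < X" unfolding L_def .
      then show ?thesis unfolding X_def[symmetric] by (simp add: INF_less_iff)
    qed
    then obtain Ms where MsP: "\<And>m. fam n (Ms m) \<and> Wd (Ms m) < L + ennreal (inverse (real (Suc m)))"
      using choice[of "\<lambda>m M. fam n M \<and> Wd M < L + ennreal (inverse (real (Suc m)))"] by blast
    have Ms: "\<And>m. fam n (Ms m)" using MsP by blast
    obtain r :: "nat \<Rightarrow> nat" and M where r: "strict_mono r" and famM: "fam n M"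
      and U: "\<forall>e>0. \<exists>m0. \<forall>m\<ge>m0. \<forall>y\<in>Rk n. \<bar>Ms (r m) y - M y\<bar> \<le> e * l1 n y"
      using fam_compact[of n Ms, OF n1 Ms] by blast
    have normM: "is_norm_on n M" by (rule fam_norm[OF n1 famM])
    have "Wd M \<le> L"
    proof (rule ennreal_le_epsilon)
      fix e :: real assume e: "0 < e"
      define \<epsilon> where "\<epsilon> = e / (4 * (\<gamma> * real n + 1))"
      have den: "4 * (\<gamma> * real n + 1) > 0" using g by (simp add: add_nonneg_pos)
      have \<epsilon>pos: "\<epsilon> > 0" unfolding \<epsilon>_def using e den by simp
      obtain m0 where m0: "\<forall>m\<ge>m0. \<forall>y\<in>Rk n. \<bar>Ms (r m) y - M y\<bar> \<le> \<epsilon> * l1 n y"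
        using U \<epsilon>pos by blast
      have e2: "e / 2 > 0" using e by simp
      obtain m1 :: nat where m1: "inverse (real (Suc m1)) < e / 2"
        using reals_Archimedean[OF e2] by blast
      define m where "m = max m0 m1"
      have "m \<le> r m" using r by (rule seq_suble)
      then have rm: "m1 \<le> r m" unfolding m_def by simp
      have inv: "inverse (real (Suc (r m))) \<le> e / 2"
      proof -
        have "inverse (real (Suc (r m))) \<le> inverse (real (Suc m1))"
          using rm by (intro le_imp_inverse_le) auto
        then show ?thesis using m1 by linarith
      qed
      define A where "A = Ms (r m)"
      have famA: "fam n A" unfolding A_def by (rule Ms)
      have normA: "is_norm_on n A" by (rule fam_norm[OF n1 famA])
      define c where "c = 1 + \<epsilon> * real n"
      have c1: "c \<ge> 1" unfolding c_def using \<epsilon>pos by simp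
      have close: "\<bar>A y - M y\<bar> \<le> \<epsilon> * real n * linf n y" if y: "y \<in> Rk n" for y
      proof -
        have "\<bar>A y - M y\<bar> \<le> \<epsilon> * l1 n y" using m0 y unfolding A_def m_def by simp
        also have "\<dots> \<le> \<epsilon> * (real n * linf n y)" using l1_le_linf[OF n1] \<epsilon>pos by (simp add: mult_left_mono)
        finally show ?thesis by (simp add: mult.assoc)
      qed
      have AM: "A y \<le> c * M y" if y: "y \<in> Rk n" for y
      proof -
        have "\<epsilon> * real n * linf n y \<le> \<epsilon> * real n * M y"
          using fam_lo[OF famM y] \<epsilon>pos by (simp add: mult_left_mono)
        then show ?thesis using close[OF y] unfolding c_def by (simp add: algebra_simps)
      qed
      have MA: "M y \<le> c * A y" if y: "y \<in> Rk n" for y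
      proof -
        have "\<epsilon> * real n * linf n y \<le> \<epsilon> * real n * A y"
          using fam_lo[OF famA y] \<epsilon>pos by (simp add: mult_left_mono)
        then show ?thesis using close[OF y] unfolding c_def by (simp add: algebra_simps)
      qed
      have tr: "Wd M \<le> Wd A + ennreal (\<gamma> * (1 - 1 / c^2))"
        unfolding Wd_def by (rule width_transfer[OF normA normM c1 g AM MA])
      have gb: "\<gamma> * (1 - 1 / c^2) \<le> e / 2"
      proof -
        have "\<gamma> * (1 - 1 / c^2) \<le> \<gamma> * (2 * (c - 1))" using c_bound[OF c1] g by (rule mult_left_mono)
        also have "\<dots> = 2 * \<gamma> * real n * \<epsilon>" unfolding c_def by (simp add: algebra_simps)
        also have "\<dots> = (2 * \<gamma> * real n) * e / (4 * (\<gamma> * real n + 1))" unfolding \<epsilon>_def by simp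
        also have "\<dots> \<le> e / 2"
        proof -
          have "(2 * \<gamma> * real n) * e \<le> (2 * (\<gamma> * real n + 1)) * e" using e by (intro mult_right_mono) auto
          then show ?thesis using den by (simp add: divide_le_eq algebra_simps)
        qed
        finally show ?thesis .
      qed
      have g0: "0 \<le> \<gamma> * (1 - 1 / c^2)"
      proof -
        have "1 \<le> c^2" using c1 by (simp add: one_le_power)
        then have "1 / c^2 \<le> 1" by (simp add: divide_le_eq_1)
        then show ?thesis using g by simp
      qed
      have "Wd M \<le> Wd A + ennreal (e / 2)"
        using tr gb by (meson add_left_mono ennreal_leI order.trans)
      also have "\<dots> \<le> (L + ennreal (inverse (real (Suc (r m))))) + ennreal (e / 2)"
        using MsP[of "r m"] unfolding A_def by (intro add_right_mono less_imp_le) simp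
      also have "\<dots> \<le> (L + ennreal (e / 2)) + ennreal (e / 2)"
        using inv by (intro add_right_mono add_left_mono ennreal_leI)
      also have "\<dots> = L + ennreal e"
        using e by (simp add: add.assoc ennreal_plus[symmetric])
      finally show "Wd M \<le> L + ennreal e" .
    qed
    then have "\<forall>M'. fam n M' \<longrightarrow> Wd M \<le> Wd M'" using Llow by (meson order.trans)
    then show ?thesis using famM unfolding Wd_def by blast
  qed
qed

theorem theorem3p3:
  fixes K :: "'a::banach set" and n :: nat and \<gamma> :: real
  assumes "n \<ge> 1" and "compact K" and "\<gamma> > 0"
  shows "\<exists>N. is_norm_on n N \<and>
           (\<forall>y\<in>Rk n. Max ((\<lambda>j. \<bar>y j\<bar>) ` {..<n}) \<le> N y \<and> N y \<le> (\<Sum>j<n. \<bar>y j\<bar>)) \<and>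
           lip_width \<gamma> K n = fixed_lip_width \<gamma> K n N"
proof -
  have g: "\<gamma> \<ge> 0" using assms(3) by simp
  obtain M where famM: "fam n M"
    and Mmin: "\<And>M'. fam n M' \<Longrightarrow> fixed_lip_width \<gamma> K n M \<le> fixed_lip_width \<gamma> K n M'"
    using minimizer[OF assms(1) g, of K] by blast
  have normM: "is_norm_on n M" by (rule fam_norm[OF assms(1) famM])
  have bounds: "\<forall>y\<in>Rk n. Max ((\<lambda>j. \<bar>y j\<bar>) ` {..<n}) \<le> M y \<and> M y \<le> (\<Sum>j<n. \<bar>y j\<bar>)"
    using famM unfolding fam_def linf_def l1_def by blast
  have "lip_width \<gamma> K n = fixed_lip_width \<gamma> K n M"
  proof (rule antisym)
    have nin: "n \<in> {1..n}" using assms(1) by simp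
    show "lip_width \<gamma> K n \<le> fixed_lip_width \<gamma> K n M" unfolding lip_width_def
      by (rule INF_lower2[OF nin]) (rule INF_lower, use normM in simp)
    show "fixed_lip_width \<gamma> K n M \<le> lip_width \<gamma> K n" unfolding lip_width_def
    proof (intro INF_greatest)
      fix k N assume k: "k \<in> {1..n}" and N: "N \<in> {N. is_norm_on k N}"
      have Nk: "is_norm_on k N" using N by simp
      have kn: "k \<le> n" using k by simp
      have en: "is_norm_on n (extn k n N)" by (rule extn_norm[OF Nk kn])
      obtain M' where M': "fam n M'"
        and M'w: "fixed_lip_width \<gamma> K n M' \<le> fixed_lip_width \<gamma> K n (extn k n N)"
        using auerbach[OF en assms(1), of \<gamma> K] by blast
      show "fixed_lip_width \<gamma> K n M \<le> fixed_lip_width \<gamma> K k N"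
        using Mmin[OF M'] M'w extn_width[OF Nk kn g, of K] by (meson order.trans)
    qed
  qed
  then show ?thesis using normM bounds by blast
qed

end
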